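(* Every epimorphism $E\colon\mathbf{B}\to\mathbf{C}$ in $\mathbf{Lens}$ is a coequaliser in $\mathbf{Lens}$ of its proxy kernel pair, and so is a regular epimorphism in $\mathbf{Lens}$.
   Context: A lens $F\colon \mathbf{A}\to\mathbf{B}$ between small categories consists of a functor $F\colon\mathbf{A}\to\mathbf{B}$ (the get functor) together with, for each object $A$ of $\mathbf{A}$, a function $\varphi_{F,A}$ from the set of morphisms of $\mathbf{B}$ with domain $FA$ to the set of morphisms of $\mathbf{A}$ with domain $A$, such that: $F(\varphi_{F,A}b)=b$; $\varphi_{F,A}(\mathrm{id}_{FA})=\mathrm{id}_A$; and $\varphi_{F,A}(b'\circ b)=\varphi_{F,A'}(b')\circ\varphi_{F,A}(b)$ whenever $b$ has domain $FA$, $A'$ is the codomain of $\varphi_{F,A}b$, and $b'$ has domain $FA'$. $\mathbf{Lens}$ is the category of small categories and lenses, with composite of $F\colon\mathbf{A}\to\mathbf{B}$, $G\colon\mathbf{B}\to\mathbf{C}$ having get functor $G\circ F$ and puts $\varphi_{G\circ F,A}(c)=\varphi_{F,A}(\varphi_{G,FA}(c))$. The proxy kernel pair of a lens $E\colon\mathbf{B}\to\mathbf{C}$ is the pair of lenses $P_1,P_2\colon\mathbf{K}\to\mathbf{B}$ where $\mathbf{K}$ is the pullback in $\mathbf{Cat}$ of the get functor of $E$ along itself, whose objects and morphisms are pairs $\langle x,y\rangle$ with $Ex=Ey$, the get functors of $P_1,P_2$ are the two projections, and the puts are, for each object $K$ of $\mathbf{K}$ and morphism $b$ of $\mathbf{B}$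 with appropriate domain, $\varphi_{P_1,K}(b)=\langle b,\varphi_{E,P_2K}(Eb)\rangle$ and $\varphi_{P_2,K}(b)=\langle\varphi_{E,P_1K}(Eb),b\rangle$. *)

theory Defs
  imports Main
begin

record ('o, 'm) cat =
  Obj  :: "'o set"
  Mor  :: "'m set"
  Dom  :: "'m \<Rightarrow> 'o"
  Cod  :: "'m \<Rightarrow> 'o"
  Id   :: "'o \<Rightarrow> 'm"
  Comp :: "'m \<Rightarrow> 'm \<Rightarrow> 'm"   (* Comp g f = g \<circ> f *)

definition is_category :: "('o, 'm) cat \<Rightarrow> bool" where
  "is_category A \<longleftrightarrow>
     (\<forall>f\<in>Mor A. Dom A f \<in> Obj A \<and> Cod A f \<in> Obj A) \<and>
     (\<forall>a\<in>Obj A. Id A a \<in> Mor A \<and> Dom A (Id A a) = a \<and> Cod A (Id A a) = a) \<and>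
     (\<forall>f\<in>Mor A. \<forall>g\<in>Mor A. Dom A g = Cod A f \<longrightarrow>
        Comp A g f \<in> Mor A \<and> Dom A (Comp A g f) = Dom A f \<and> Cod A (Comp A g f) = Cod A g) \<and>
     (\<forall>f\<in>Mor A. Comp A (Id A (Cod A f)) f = f \<and> Comp A f (Id A (Dom A f)) = f) \<and>
     (\<forall>f\<in>Mor A. \<forall>g\<in>Mor A. \<forall>h\<in>Mor A. Dom A g = Cod A f \<longrightarrow> Dom A h = Cod A g \<longrightarrow>
        Comp A h (Comp A g f) = Comp A (Comp A h g) f)"

text \<open>A lens consists of a get functor (object part and morphism part) and the puts
  (Put F a b is the lift of b, a morphism of the codomain with domain F a).
  Only values on the carriers are meaningful.\<close>

record ('ao, 'am, 'bo, 'bm) lens =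
  GetO :: "'ao \<Rightarrow> 'bo"
  GetM :: "'am \<Rightarrow> 'bm"
  Put  :: "'ao \<Rightarrow> 'bm \<Rightarrow> 'am"

definition is_lens ::
  "('ao, 'am) cat \<Rightarrow> ('bo, 'bm) cat \<Rightarrow> ('ao, 'am, 'bo, 'bm) lens \<Rightarrow> bool" where
  "is_lens A B F \<longleftrightarrow>
     (\<forall>a\<in>Obj A. GetO F a \<in> Obj B) \<and>
     (\<forall>f\<in>Mor A. GetM F f \<in> Mor B \<and> Dom B (GetM F f) = GetO F (Dom A f) \<and>
                  Cod B (GetM F f) = GetO F (Cod A f)) \<and>
     (\<forall>a\<in>Obj A. GetM F (Id A a) = Id B (GetO F a)) \<and>
     (\<forall>f\<in>Mor A. \<forall>g\<in>Mor A. Dom A g = Cod A f \<longrightarrow>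
        GetM F (Comp A g f) = Comp B (GetM F g) (GetM F f)) \<and>
     (\<forall>a\<in>Obj A. \<forall>b\<in>Mor B. Dom B b = GetO F a \<longrightarrow>
        Put F a b \<in> Mor A \<and> Dom A (Put F a b) = a \<and> GetM F (Put F a b) = b) \<and>
     (\<forall>a\<in>Obj A. Put F a (Id B (GetO F a)) = Id A a) \<and>
     (\<forall>a\<in>Obj A. \<forall>b\<in>Mor B. \<forall>b'\<in>Mor B. Dom B b = GetO F a \<longrightarrow>
        Dom B b' = GetO F (Cod A (Put F a b)) \<longrightarrow>
        Put F a (Comp B b' b) = Comp A (Put F (Cod A (Put F a b)) b') (Put F a b))"

text \<open>Composite of F : A \<rightarrow> B and G : B \<rightarrow> C (diagrammatic order of arguments).\<close>

definition lens_comp ::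
  "('ao, 'am, 'bo, 'bm) lens \<Rightarrow> ('bo, 'bm, 'co, 'cm) lens \<Rightarrow> ('ao, 'am, 'co, 'cm) lens" where
  "lens_comp F G = \<lparr> GetO = GetO G \<circ> GetO F, GetM = GetM G \<circ> GetM F,
                     Put = (\<lambda>a c. Put F a (Put G (GetO F a) c)) \<rparr>"

definition lens_eq ::
  "('ao, 'am) cat \<Rightarrow> ('bo, 'bm) cat \<Rightarrow> ('ao, 'am, 'bo, 'bm) lens \<Rightarrow> ('ao, 'am, 'bo, 'bm) lens \<Rightarrow> bool" where
  "lens_eq A B F G \<longleftrightarrow>
     (\<forall>a\<in>Obj A. GetO F a = GetO G a) \<and>
     (\<forall>f\<in>Mor A. GetM F f = GetM G f) \<and>
     (\<forall>a\<in>Obj A. \<forall>b\<in>Mor B. Dom B b = GetO F a \<longrightarrow> Put F a b = Put G a b)"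

text \<open>Test categories range over all small categories whose objects and morphisms live in
  a fixed type large enough to encode every construction on B and C.\<close>

type_synonym ('bo, 'bm, 'co, 'cm) test_univ = "('bo + 'bm + 'co + 'cm + nat) set"

definition lens_epi ::
  "('bo, 'bm) cat \<Rightarrow> ('co, 'cm) cat \<Rightarrow> ('bo, 'bm, 'co, 'cm) lens \<Rightarrow> bool" where
  "lens_epi B C E \<longleftrightarrow> is_lens B C E \<and>
     (\<forall>(D :: (('bo, 'bm, 'co, 'cm) test_univ, ('bo, 'bm, 'co, 'cm) test_univ) cat) G H.
        is_category D \<longrightarrow> is_lens C D G \<longrightarrow> is_lens C D H \<longrightarrow>
        lens_eq B D (lens_comp E G) (lens_comp E H) \<longrightarrow> lens_eq C D G H)"

definition pk_cat :: "('bo, 'bm) cat \<Rightarrow> ('bo, 'bm, 'co, 'cm) lens \<Rightarrow> ('bo \<times> 'bo, 'bm \<times> 'bm) cat" where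
  "pk_cat B E = \<lparr>
     Obj = {(x, y). x \<in> Obj B \<and> y \<in> Obj B \<and> GetO E x = GetO E y},
     Mor = {(f, g). f \<in> Mor B \<and> g \<in> Mor B \<and> GetM E f = GetM E g},
     Dom = (\<lambda>(f, g). (Dom B f, Dom B g)),
     Cod = (\<lambda>(f, g). (Cod B f, Cod B g)),
     Id = (\<lambda>(x, y). (Id B x, Id B y)),
     Comp = (\<lambda>(g1, g2) (f1, f2). (Comp B g1 f1, Comp B g2 f2)) \<rparr>"

definition pk_P1 :: "('bo, 'bm, 'co, 'cm) lens \<Rightarrow> ('bo \<times> 'bo, 'bm \<times> 'bm, 'bo, 'bm) lens" where
  "pk_P1 E = \<lparr> GetO = fst, GetM = fst,
               Put = (\<lambda>K b. (b, Put E (snd K) (GetM E b))) \<rparr>"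

definition pk_P2 :: "('bo, 'bm, 'co, 'cm) lens \<Rightarrow> ('bo \<times> 'bo, 'bm \<times> 'bm, 'bo, 'bm) lens" where
  "pk_P2 E = \<lparr> GetO = snd, GetM = snd,
               Put = (\<lambda>K b. (Put E (fst K) (GetM E b), b)) \<rparr>"

text \<open>E : B \<rightarrow> C is a coequaliser of P, Q : K \<rightarrow> B, tested against all target categories
  whose objects/morphisms have types 'do, 'dm (fixed by the itself-argument).\<close>

definition lens_coequaliser ::
  "('do \<times> 'dm) itself \<Rightarrow> ('ko, 'km) cat \<Rightarrow> ('bo, 'bm) cat \<Rightarrow> ('co, 'cm) cat \<Rightarrow>
   ('ko, 'km, 'bo, 'bm) lens \<Rightarrow> ('ko, 'km, 'bo, 'bm) lens \<Rightarrow> ('bo, 'bm, 'co, 'cm) lens \<Rightarrow> bool" where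
  "lens_coequaliser _ K B C P Q E \<longleftrightarrow>
     is_lens B C E \<and> lens_eq K C (lens_comp P E) (lens_comp Q E) \<and>
     (\<forall>(D :: ('do, 'dm) cat) G. is_category D \<longrightarrow> is_lens B D G \<longrightarrow>
        lens_eq K D (lens_comp P G) (lens_comp Q G) \<longrightarrow>
        (\<exists>H. is_lens C D H \<and> lens_eq B D (lens_comp E H) G \<and>
             (\<forall>H'. is_lens C D H' \<longrightarrow> lens_eq B D (lens_comp E H') G \<longrightarrow> lens_eq C D H' H)))"

end

theory Submission
  imports Defs
begin

section \<open>Transport of categories and lenses along injections\<close>

definition cmap :: "('a \<Rightarrow> 'x) \<Rightarrow> ('b \<Rightarrow> 'y) \<Rightarrow> ('a, 'b) cat \<Rightarrow> ('x, 'y) cat" where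
  "cmap eo em A = \<lparr> Obj = eo ` Obj A, Mor = em ` Mor A,
     Dom = (\<lambda>g. eo (Dom A (inv em g))), Cod = (\<lambda>g. eo (Cod A (inv em g))),
     Id = (\<lambda>x. em (Id A (inv eo x))),
     Comp = (\<lambda>g f. em (Comp A (inv em g) (inv em f))) \<rparr>"

definition lmap :: "('a \<Rightarrow> 'x) \<Rightarrow> ('b \<Rightarrow> 'y) \<Rightarrow> ('co, 'cm, 'a, 'b) lens \<Rightarrow> ('co, 'cm, 'x, 'y) lens" where
  "lmap eo em L = \<lparr> GetO = eo \<circ> GetO L, GetM = em \<circ> GetM L,
     Put = (\<lambda>a d. Put L a (inv em d)) \<rparr>"

lemma cmap_cat:
  assumes "inj eo" "inj em" "is_category A"
  shows "is_category (cmap eo em A)"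
  using assms unfolding is_category_def cmap_def by (auto simp: inj_eq)

lemma lmap_lens:
  assumes "inj eo" "inj em" "is_lens C A L"
  shows "is_lens C (cmap eo em A) (lmap eo em L)"
  using assms unfolding is_lens_def cmap_def lmap_def by (auto simp: inj_eq)

lemma lmap_eq:
  assumes "inj eo" "inj em" "lens_eq B A (lens_comp E G) (lens_comp E H)"
  shows "lens_eq B (cmap eo em A) (lens_comp E (lmap eo em G)) (lens_comp E (lmap eo em H))"
  using assms unfolding lens_eq_def cmap_def lmap_def lens_comp_def by (auto simp: inj_eq)

lemma lmap_eq_back:
  assumes "inj eo" "inj em" "lens_eq C (cmap eo em A) (lmap eo em G) (lmap eo em H)"
  shows "lens_eq C A G H"
  using assms unfolding lens_eq_def cmap_def lmap_def
  by (auto simp: inj_eq)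

section \<open>Epimorphisms are surjective on objects\<close>

definition tD :: "('co, 'cm) cat \<Rightarrow> 'co set \<Rightarrow> ('co \<times> bool, 'cm \<times> bool) cat" where
  "tD C U = \<lparr> Obj = {(c, b). c \<in> Obj C \<and> (b \<longrightarrow> c \<notin> U)},
     Mor = {(f, b). f \<in> Mor C \<and> (b \<longrightarrow> Dom C f \<notin> U)},
     Dom = (\<lambda>(f, b). (Dom C f, b)),
     Cod = (\<lambda>(f, b). (Cod C f, b \<and> Cod C f \<notin> U)),
     Id = (\<lambda>(c, b). (Id C c, b)),
     Comp = (\<lambda>(g, b') (f, b). (Comp C g f, b)) \<rparr>"

definition tG :: "('co, 'cm, 'co \<times> bool, 'cm \<times> bool) lens" where
  "tG = \<lparr> GetO = (\<lambda>c. (c, False)), GetM = (\<lambda>f. (f, False)), Put = (\<lambda>c d. fst d) \<rparr>"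

definition tH :: "('co, 'cm) cat \<Rightarrow> 'co set \<Rightarrow> ('co, 'cm, 'co \<times> bool, 'cm \<times> bool) lens" where
  "tH C U = \<lparr> GetO = (\<lambda>c. (c, c \<notin> U)), GetM = (\<lambda>f. (f, Dom C f \<notin> U)), Put = (\<lambda>c d. fst d) \<rparr>"

definition upclosed :: "('co, 'cm) cat \<Rightarrow> 'co set \<Rightarrow> bool" where
  "upclosed C U \<longleftrightarrow> (\<forall>f\<in>Mor C. Dom C f \<in> U \<longrightarrow> Cod C f \<in> U)"

lemma tD_cat:
  assumes "is_category C" "upclosed C U"
  shows "is_category (tD C U)"
  using assms unfolding is_category_def tD_def upclosed_def
  by (auto split: prod.splits)

lemma tG_lens:
  assumes "is_category C" "upclosed C U"
  shows "is_lens C (tD C U) tG"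
  using assms unfolding is_category_def is_lens_def tD_def tG_def upclosed_def
  by (auto split: prod.splits)

lemma tH_lens:
  assumes "is_category C" "upclosed C U"
  shows "is_lens C (tD C U) (tH C U)"
  using assms unfolding is_category_def is_lens_def tD_def tH_def upclosed_def
  by (auto split: prod.splits)


lemma epi_upclosed:
  assumes "is_category B" "is_lens B C E"
  shows "upclosed C (GetO E ` Obj B)"
  unfolding upclosed_def
proof (intro ballI impI)
  fix f assume f: "f \<in> Mor C" "Dom C f \<in> GetO E ` Obj B"
  then obtain x where x: "x \<in> Obj B" "Dom C f = GetO E x" by auto
  have p: "Put E x f \<in> Mor B" "Dom B (Put E x f) = x" "GetM E (Put E x f) = f"
    using assms(2) x f unfolding is_lens_def by auto
  have "Cod B (Put E x f) \<in> Obj B" using assms(1) p unfolding is_category_def by auto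
  moreover have "Cod C f = GetO E (Cod B (Put E x f))"
    using assms(2) p unfolding is_lens_def by metis
  ultimately show "Cod C f \<in> GetO E ` Obj B" by auto
qed

definition eoT :: "'co \<times> bool \<Rightarrow> ('bo, 'bm, 'co, 'cm) test_univ" where
  "eoT p = {Inr (Inr (Inl (fst p))), Inr (Inr (Inr (Inr (if snd p then 1 else 0))))}"

definition emT :: "'cm \<times> bool \<Rightarrow> ('bo, 'bm, 'co, 'cm) test_univ" where
  "emT p = {Inr (Inr (Inr (Inl (fst p)))), Inr (Inr (Inr (Inr (if snd p then 1 else 0))))}"

lemma inj_eoT: "inj eoT"
  unfolding inj_def eoT_def by (auto simp: doubleton_eq_iff split: if_splits)

lemma inj_emT: "inj emT"
  unfolding inj_def emT_def by (auto simp: doubleton_eq_iff split: if_splits)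

lemma epi_surj:
  fixes B :: "('bo, 'bm) cat" and C :: "('co, 'cm) cat" and E :: "('bo, 'bm, 'co, 'cm) lens"
  assumes B: "is_category B" and C: "is_category C" and epi: "lens_epi B C E"
    and c: "c \<in> Obj C"
  shows "\<exists>x\<in>Obj B. GetO E x = c"
proof (rule ccontr)
  assume nc: "\<not> (\<exists>x\<in>Obj B. GetO E x = c)"
  define U where "U = GetO E ` Obj B"
  have EL: "is_lens B C E" using epi unfolding lens_epi_def by auto
  have up: "upclosed C U" unfolding U_def using epi_upclosed[OF B EL] .
  define D :: "(('bo, 'bm, 'co, 'cm) test_univ, ('bo, 'bm, 'co, 'cm) test_univ) cat"
    where "D = cmap eoT emT (tD C U)"
  define G where "G = lmap (eoT :: _ \<Rightarrow> ('bo, 'bm, 'co, 'cm) test_univ)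
       (emT :: _ \<Rightarrow> ('bo, 'bm, 'co, 'cm) test_univ) tG"
  define H where "H = lmap (eoT :: _ \<Rightarrow> ('bo, 'bm, 'co, 'cm) test_univ)
       (emT :: _ \<Rightarrow> ('bo, 'bm, 'co, 'cm) test_univ) (tH C U)"
  have D: "is_category D" unfolding D_def by (rule cmap_cat[OF inj_eoT inj_emT tD_cat[OF C up]])
  have G: "is_lens C D G" unfolding D_def G_def by (rule lmap_lens[OF inj_eoT inj_emT tG_lens[OF C up]])
  have H: "is_lens C D H" unfolding D_def H_def by (rule lmap_lens[OF inj_eoT inj_emT tH_lens[OF C up]])
  have eq0: "lens_eq B (tD C U) (lens_comp E tG) (lens_comp E (tH C U))"
  proof -
    have "\<forall>f\<in>Mor B. GetO E (Dom B f) \<in> U" using B unfolding U_def is_category_def by auto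
    moreover have "\<forall>f\<in>Mor B. Dom C (GetM E f) = GetO E (Dom B f)"
      using EL unfolding is_lens_def by auto
    ultimately show ?thesis unfolding lens_eq_def lens_comp_def tG_def tH_def U_def by auto
  qed
  have eq: "lens_eq B D (lens_comp E G) (lens_comp E H)"
    unfolding D_def G_def H_def by (rule lmap_eq[OF inj_eoT inj_emT eq0])
  have "lens_eq C D G H" using epi D G H eq unfolding lens_epi_def by blast
  then have "lens_eq C (tD C U) tG (tH C U)"
    unfolding D_def G_def H_def by (rule lmap_eq_back[OF inj_eoT inj_emT])
  then have "GetO (tG :: (_, 'cm, _, _) lens) c = GetO (tH C U) c" using c unfolding lens_eq_def by blast
  moreover have "c \<notin> U" using nc unfolding U_def by auto
  ultimately show False unfolding tG_def tH_def by auto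
qed


lemma catD:
  assumes "is_category A"
  shows cat_dom: "f \<in> Mor A \<Longrightarrow> Dom A f \<in> Obj A"
    and cat_cod: "f \<in> Mor A \<Longrightarrow> Cod A f \<in> Obj A"
    and cat_id: "a \<in> Obj A \<Longrightarrow> Id A a \<in> Mor A"
    and cat_id_dom: "a \<in> Obj A \<Longrightarrow> Dom A (Id A a) = a"
    and cat_id_cod: "a \<in> Obj A \<Longrightarrow> Cod A (Id A a) = a"
    and cat_comp: "f \<in> Mor A \<Longrightarrow> g \<in> Mor A \<Longrightarrow> Dom A g = Cod A f \<Longrightarrow> Comp A g f \<in> Mor A"
    and cat_comp_dom: "f \<in> Mor A \<Longrightarrow> g \<in> Mor A \<Longrightarrow> Dom A g = Cod A f \<Longrightarrow> Dom A (Comp A g f) = Dom A f"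
    and cat_comp_cod: "f \<in> Mor A \<Longrightarrow> g \<in> Mor A \<Longrightarrow> Dom A g = Cod A f \<Longrightarrow> Cod A (Comp A g f) = Cod A g"
  using assms unfolding is_category_def by auto

lemma lensD:
  assumes "is_lens A B F"
  shows ln_obj: "a \<in> Obj A \<Longrightarrow> GetO F a \<in> Obj B"
    and ln_mor: "f \<in> Mor A \<Longrightarrow> GetM F f \<in> Mor B"
    and ln_dom: "f \<in> Mor A \<Longrightarrow> Dom B (GetM F f) = GetO F (Dom A f)"
    and ln_cod: "f \<in> Mor A \<Longrightarrow> Cod B (GetM F f) = GetO F (Cod A f)"
    and ln_id: "a \<in> Obj A \<Longrightarrow> GetM F (Id A a) = Id B (GetO F a)"
    and ln_comp: "f \<in> Mor A \<Longrightarrow> g \<in> Mor A \<Longrightarrow> Dom A g = Cod A f \<Longrightarrow>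
        GetM F (Comp A g f) = Comp B (GetM F g) (GetM F f)"
    and ln_put_mor: "a \<in> Obj A \<Longrightarrow> b \<in> Mor B \<Longrightarrow> Dom B b = GetO F a \<Longrightarrow> Put F a b \<in> Mor A"
    and ln_put_dom: "a \<in> Obj A \<Longrightarrow> b \<in> Mor B \<Longrightarrow> Dom B b = GetO F a \<Longrightarrow> Dom A (Put F a b) = a"
    and ln_put_get: "a \<in> Obj A \<Longrightarrow> b \<in> Mor B \<Longrightarrow> Dom B b = GetO F a \<Longrightarrow> GetM F (Put F a b) = b"
    and ln_put_id: "a \<in> Obj A \<Longrightarrow> Put F a (Id B (GetO F a)) = Id A a"
    and ln_put_comp: "a \<in> Obj A \<Longrightarrow> b \<in> Mor B \<Longrightarrow> b' \<in> Mor B \<Longrightarrow> Dom B b = GetO F a \<Longrightarrow>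
        Dom B b' = GetO F (Cod A (Put F a b)) \<Longrightarrow>
        Put F a (Comp B b' b) = Comp A (Put F (Cod A (Put F a b)) b') (Put F a b)"
  using assms unfolding is_lens_def by auto

section \<open>Construction of the mediating lens\<close>

locale coeq_setup =
  fixes B :: "('bo, 'bm) cat" and C :: "('co, 'cm) cat" and D :: "('do, 'dm) cat"
    and E :: "('bo, 'bm, 'co, 'cm) lens" and G :: "('bo, 'bm, 'do, 'dm) lens"
  assumes B: "is_category B" and C: "is_category C" and D: "is_category D"
    and EL: "is_lens B C E" and GL: "is_lens B D G"
    and surj: "\<forall>c\<in>Obj C. \<exists>x\<in>Obj B. GetO E x = c"
    and KG: "lens_eq (pk_cat B E) D (lens_comp (pk_P1 E) G) (lens_comp (pk_P2 E) G)"
begin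

definition pick :: "'co \<Rightarrow> 'bo" where
  "pick c = (SOME x. x \<in> Obj B \<and> GetO E x = c)"

lemma pick: "c \<in> Obj C \<Longrightarrow> pick c \<in> Obj B \<and> GetO E (pick c) = c"
  unfolding pick_def using surj by (metis (mono_tags, lifting) someI_ex)

lemma KO: "x \<in> Obj B \<Longrightarrow> y \<in> Obj B \<Longrightarrow> GetO E x = GetO E y \<Longrightarrow> GetO G x = GetO G y"
proof -
  assume a: "x \<in> Obj B" "y \<in> Obj B" "GetO E x = GetO E y"
  have "(x, y) \<in> Obj (pk_cat B E)" using a unfolding pk_cat_def by auto
  then have "GetO (lens_comp (pk_P1 E) G) (x, y) = GetO (lens_comp (pk_P2 E) G) (x, y)"
    using KG unfolding lens_eq_def by blast
  then show ?thesis unfolding lens_comp_def pk_P1_def pk_P2_def by simp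
qed

lemma KM: "f \<in> Mor B \<Longrightarrow> g \<in> Mor B \<Longrightarrow> GetM E f = GetM E g \<Longrightarrow> GetM G f = GetM G g"
proof -
  assume a: "f \<in> Mor B" "g \<in> Mor B" "GetM E f = GetM E g"
  have "(f, g) \<in> Mor (pk_cat B E)" using a unfolding pk_cat_def by auto
  then have "GetM (lens_comp (pk_P1 E) G) (f, g) = GetM (lens_comp (pk_P2 E) G) (f, g)"
    using KG unfolding lens_eq_def by blast
  then show ?thesis unfolding lens_comp_def pk_P1_def pk_P2_def by simp
qed

lemma KP: "x \<in> Obj B \<Longrightarrow> y \<in> Obj B \<Longrightarrow> GetO E x = GetO E y \<Longrightarrow> d \<in> Mor D \<Longrightarrow>
   Dom D d = GetO G x \<Longrightarrow> Put G x d = Put E x (GetM E (Put G y d))"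
proof -
  assume a: "x \<in> Obj B" "y \<in> Obj B" "GetO E x = GetO E y" "d \<in> Mor D" "Dom D d = GetO G x"
  have "(x, y) \<in> Obj (pk_cat B E)" using a unfolding pk_cat_def by auto
  moreover have "Dom D d = GetO (lens_comp (pk_P1 E) G) (x, y)"
    using a unfolding lens_comp_def pk_P1_def by auto
  ultimately have "Put (lens_comp (pk_P1 E) G) (x, y) d = Put (lens_comp (pk_P2 E) G) (x, y) d"
    using KG a(4) unfolding lens_eq_def by blast
  then show ?thesis unfolding lens_comp_def pk_P1_def pk_P2_def by auto
qed

lemma KP2: "x \<in> Obj B \<Longrightarrow> y \<in> Obj B \<Longrightarrow> GetO E x = GetO E y \<Longrightarrow> d \<in> Mor D \<Longrightarrow>
   Dom D d = GetO G x \<Longrightarrow> GetM E (Put G x d) = GetM E (Put G y d)"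
proof -
  assume a: "x \<in> Obj B" "y \<in> Obj B" "GetO E x = GetO E y" "d \<in> Mor D" "Dom D d = GetO G x"
  have gy: "Dom D d = GetO G y" using a KO by metis
  have m: "Put G y d \<in> Mor B" "Dom B (Put G y d) = y"
    using a gy ln_put_mor[OF GL] ln_put_dom[OF GL] by auto
  have "GetM E (Put G x d) = GetM E (Put E x (GetM E (Put G y d)))" using KP a by metis
  also have "\<dots> = GetM E (Put G y d)"
    using ln_put_get[OF EL a(1) ln_mor[OF EL m(1)]] ln_dom[OF EL m(1)] m a(3) by auto
  finally show ?thesis .
qed

definition Hc :: "('co, 'cm, 'do, 'dm) lens" where
  "Hc = \<lparr> GetO = (\<lambda>c. GetO G (pick c)),
          GetM = (\<lambda>h. GetM G (Put E (pick (Dom C h)) h)),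
          Put = (\<lambda>c d. GetM E (Put G (pick c) d)) \<rparr>"


lemma Hc_simps:
  "GetO Hc c = GetO G (pick c)"
  "GetM Hc h = GetM G (Put E (pick (Dom C h)) h)"
  "Put Hc c d = GetM E (Put G (pick c) d)"
  unfolding Hc_def by simp_all

lemma H_obj_E: "x \<in> Obj B \<Longrightarrow> GetO Hc (GetO E x) = GetO G x"
  using pick[OF ln_obj[OF EL]] KO unfolding Hc_simps by metis

lemma H_mor_indep:
  assumes h: "h \<in> Mor C" and x: "x \<in> Obj B" "GetO E x = Dom C h"
  shows "GetM Hc h = GetM G (Put E x h)"
proof -
  have pc: "pick (Dom C h) \<in> Obj B" "GetO E (pick (Dom C h)) = Dom C h"
    using pick[OF cat_dom[OF C h]] by auto
  have "GetM G (Put E (pick (Dom C h)) h) = GetM G (Put E x h)"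
    apply (rule KM)
    using ln_put_mor[OF EL] ln_put_get[OF EL] pc x h by auto
  then show ?thesis unfolding Hc_simps .
qed

lemma H_mor_E: "f \<in> Mor B \<Longrightarrow> GetM Hc (GetM E f) = GetM G f"
proof -
  assume f: "f \<in> Mor B"
  have d: "Dom B f \<in> Obj B" using cat_dom[OF B f] .
  have "GetM Hc (GetM E f) = GetM G (Put E (Dom B f) (GetM E f))"
    using H_mor_indep[OF ln_mor[OF EL f] d] ln_dom[OF EL f] by simp
  also have "\<dots> = GetM G f"
    apply (rule KM)
    using ln_put_mor[OF EL] ln_put_get[OF EL] ln_mor[OF EL f] ln_dom[OF EL f] d f by auto
  finally show ?thesis .
qed

lemma H_put_indep:
  assumes c: "c \<in> Obj C" and x: "x \<in> Obj B" "GetO E x = c" and d: "d \<in> Mor D" "Dom D d = GetO G x"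
  shows "Put Hc c d = GetM E (Put G x d)"
proof -
  have pc: "pick c \<in> Obj B" "GetO E (pick c) = c" using pick[OF c] by auto
  have "GetO G (pick c) = GetO G x" using KO pc x by metis
  then have "GetM E (Put G (pick c) d) = GetM E (Put G x d)"
    using KP2[OF pc(1) x(1)] pc x d by metis
  then show ?thesis unfolding Hc_simps .
qed

lemma Hc_lens: "is_lens C D Hc"
  unfolding is_lens_def
proof (intro conjI ballI impI)
  fix c assume c: "c \<in> Obj C"
  show "GetO Hc c \<in> Obj D" using c pick ln_obj[OF GL] unfolding Hc_simps by auto
next
  fix h assume h: "h \<in> Mor C"
  define x where "x = pick (Dom C h)"
  have x: "x \<in> Obj B" "GetO E x = Dom C h" using pick[OF cat_dom[OF C h]] x_def by auto
  define p where "p = Put E x h"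
  have p: "p \<in> Mor B" "Dom B p = x" "GetM E p = h"
    using ln_put_mor[OF EL] ln_put_dom[OF EL] ln_put_get[OF EL] x h p_def by auto
  have Hh: "GetM Hc h = GetM G p" using H_mor_indep[OF h x] p_def by simp
  show "GetM Hc h \<in> Mor D" using Hh ln_mor[OF GL p(1)] by simp
  show "Dom D (GetM Hc h) = GetO Hc (Dom C h)"
    using Hh ln_dom[OF GL p(1)] p x H_obj_E by metis
  have "Cod C h = GetO E (Cod B p)" using ln_cod[OF EL p(1)] p by simp
  then show "Cod D (GetM Hc h) = GetO Hc (Cod C h)"
    using Hh ln_cod[OF GL p(1)] H_obj_E cat_cod[OF B p(1)] by metis
next
  fix c assume c: "c \<in> Obj C"
  define x where "x = pick c"
  have x: "x \<in> Obj B" "GetO E x = c" using pick[OF c] x_def by auto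
  have "GetM Hc (Id C c) = GetM G (Put E x (Id C c))"
    using H_mor_indep[OF cat_id[OF C c] x(1)] cat_id_dom[OF C c] x by simp
  also have "\<dots> = GetM G (Id B x)" using ln_put_id[OF EL x(1)] x by simp
  also have "\<dots> = Id D (GetO G x)" using ln_id[OF GL x(1)] .
  also have "\<dots> = Id D (GetO Hc c)" using x_def unfolding Hc_simps by simp
  finally show "GetM Hc (Id C c) = Id D (GetO Hc c)" .
next
  fix h g assume h: "h \<in> Mor C" and g: "g \<in> Mor C" and hg: "Dom C g = Cod C h"
  define x where "x = pick (Dom C h)"
  have x: "x \<in> Obj B" "GetO E x = Dom C h" using pick[OF cat_dom[OF C h]] x_def by auto
  define p where "p = Put E x h"
  have p: "p \<in> Mor B" "Dom B p = x" "GetM E p = h"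
    using ln_put_mor[OF EL] ln_put_dom[OF EL] ln_put_get[OF EL] x h p_def by auto
  define x' where "x' = Cod B p"
  have x': "x' \<in> Obj B" "GetO E x' = Dom C g"
    using cat_cod[OF B p(1)] ln_cod[OF EL p(1)] p hg x'_def by auto
  define q where "q = Put E x' g"
  have q: "q \<in> Mor B" "Dom B q = x'" "GetM E q = g"
    using ln_put_mor[OF EL] ln_put_dom[OF EL] ln_put_get[OF EL] x' g q_def by auto
  have gh: "Comp C g h \<in> Mor C" "Dom C (Comp C g h) = Dom C h"
    using cat_comp[OF C h g hg] cat_comp_dom[OF C h g hg] by auto
  have "GetM Hc (Comp C g h) = GetM G (Put E x (Comp C g h))"
    using H_mor_indep[OF gh(1) x(1)] gh x by simp
  also have "Put E x (Comp C g h) = Comp B q p"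
    using ln_put_comp[OF EL x(1) h g] x x' hg p_def q_def x'_def by simp
  also have "GetM G (Comp B q p) = Comp D (GetM G q) (GetM G p)"
    using ln_comp[OF GL p(1) q(1)] q x'_def by simp
  also have "GetM G q = GetM Hc g" using H_mor_indep[OF g x'] q_def by simp
  also have "GetM G p = GetM Hc h" using H_mor_indep[OF h x] p_def by simp
  finally show "GetM Hc (Comp C g h) = Comp D (GetM Hc g) (GetM Hc h)" .
next
  fix c d assume c: "c \<in> Obj C" and d: "d \<in> Mor D" and dd: "Dom D d = GetO Hc c"
  define x where "x = pick c"
  have x: "x \<in> Obj B" "GetO E x = c" using pick[OF c] x_def by auto
  have dx: "Dom D d = GetO G x" using dd x_def unfolding Hc_simps by simp
  define q where "q = Put G x d"
  have q: "q \<in> Mor B" "Dom B q = x" "GetM G q = d"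
    using ln_put_mor[OF GL] ln_put_dom[OF GL] ln_put_get[OF GL] x d dx q_def by auto
  have P: "Put Hc c d = GetM E q" using q_def x_def unfolding Hc_simps by simp
  show "Put Hc c d \<in> Mor C" using P ln_mor[OF EL q(1)] by simp
  show "Dom C (Put Hc c d) = c" using P ln_dom[OF EL q(1)] q x by simp
  show "GetM Hc (Put Hc c d) = d" using P H_mor_E[OF q(1)] q by simp
next
  fix c assume c: "c \<in> Obj C"
  define x where "x = pick c"
  have x: "x \<in> Obj B" "GetO E x = c" using pick[OF c] x_def by auto
  have "Put Hc c (Id D (GetO Hc c)) = GetM E (Put G x (Id D (GetO G x)))"
    using x_def unfolding Hc_simps by simp
  also have "\<dots> = GetM E (Id B x)" using ln_put_id[OF GL x(1)] by simp
  also have "\<dots> = Id C c" using ln_id[OF EL x(1)] x by simp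
  finally show "Put Hc c (Id D (GetO Hc c)) = Id C c" .
next
  fix c d d' assume c: "c \<in> Obj C" and d: "d \<in> Mor D" and d': "d' \<in> Mor D"
    and dd: "Dom D d = GetO Hc c" and dd': "Dom D d' = GetO Hc (Cod C (Put Hc c d))"
  define x where "x = pick c"
  have x: "x \<in> Obj B" "GetO E x = c" using pick[OF c] x_def by auto
  have dx: "Dom D d = GetO G x" using dd x_def unfolding Hc_simps by simp
  define q where "q = Put G x d"
  have q: "q \<in> Mor B" "Dom B q = x" "GetM G q = d"
    using ln_put_mor[OF GL] ln_put_dom[OF GL] ln_put_get[OF GL] x d dx q_def by auto
  have P: "Put Hc c d = GetM E q" using q_def x_def unfolding Hc_simps by simp
  define x1 where "x1 = Cod B q"
  have x1: "x1 \<in> Obj B" using cat_cod[OF B q(1)] x1_def by simp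
  have cP: "Cod C (Put Hc c d) = GetO E x1" using P ln_cod[OF EL q(1)] x1_def by simp
  have dx1: "Dom D d' = GetO G x1" using dd' cP H_obj_E[OF x1] by simp
  have "Put Hc c (Comp D d' d) = GetM E (Put G x (Comp D d' d))"
    using x_def unfolding Hc_simps by simp
  also have "Put G x (Comp D d' d) = Comp B (Put G x1 d') q"
    using ln_put_comp[OF GL x(1) d d' dx] dx1 q_def x1_def by simp
  also have "GetM E (Comp B (Put G x1 d') q) = Comp C (GetM E (Put G x1 d')) (GetM E q)"
    using ln_comp[OF EL q(1) ln_put_mor[OF GL x1 d' dx1]] ln_put_dom[OF GL x1 d' dx1] x1_def by simp
  also have "GetM E (Put G x1 d') = Put Hc (Cod C (Put Hc c d)) d'"
    using H_put_indep[OF _ x1 _ d' dx1] cP ln_obj[OF EL x1] by simp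
  finally show "Put Hc c (Comp D d' d) = Comp C (Put Hc (Cod C (Put Hc c d)) d') (Put Hc c d)"
    using P by simp
qed

lemma Hc_fact: "lens_eq B D (lens_comp E Hc) G"
  unfolding lens_eq_def
proof (intro conjI ballI impI)
  fix x assume "x \<in> Obj B"
  then show "GetO (lens_comp E Hc) x = GetO G x" using H_obj_E unfolding lens_comp_def by simp
next
  fix f assume "f \<in> Mor B"
  then show "GetM (lens_comp E Hc) f = GetM G f" using H_mor_E unfolding lens_comp_def by simp
next
  fix x d assume x: "x \<in> Obj B" and d: "d \<in> Mor D" and dd: "Dom D d = GetO (lens_comp E Hc) x"
  have dx: "Dom D d = GetO G x" using dd H_obj_E[OF x] unfolding lens_comp_def by simp
  have "Put (lens_comp E Hc) x d = Put E x (Put Hc (GetO E x) d)" unfolding lens_comp_def by simp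
  also have "\<dots> = Put E x (GetM E (Put G x d))"
    using H_put_indep[OF ln_obj[OF EL x] x _ d dx] by simp
  also have "\<dots> = Put G x d" using KP[OF x x _ d dx] by simp
  finally show "Put (lens_comp E Hc) x d = Put G x d" .
qed

lemma Hc_unique:
  assumes H': "is_lens C D H'" and eq: "lens_eq B D (lens_comp E H') G"
  shows "lens_eq C D H' Hc"
  unfolding lens_eq_def
proof (intro conjI ballI impI)
  have eO: "\<And>x. x \<in> Obj B \<Longrightarrow> GetO H' (GetO E x) = GetO G x"
    using eq unfolding lens_eq_def lens_comp_def by simp
  have eM: "\<And>f. f \<in> Mor B \<Longrightarrow> GetM H' (GetM E f) = GetM G f"
    using eq unfolding lens_eq_def lens_comp_def by simp
  {
    fix c assume c: "c \<in> Obj C"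
    define x where "x = pick c"
    have x: "x \<in> Obj B" "GetO E x = c" using pick[OF c] x_def by auto
    show "GetO H' c = GetO Hc c" using eO[OF x(1)] x x_def unfolding Hc_simps by simp
  }
  {
    fix h assume h: "h \<in> Mor C"
    define x where "x = pick (Dom C h)"
    have x: "x \<in> Obj B" "GetO E x = Dom C h" using pick[OF cat_dom[OF C h]] x_def by auto
    define p where "p = Put E x h"
    have p: "p \<in> Mor B" "Dom B p = x" "GetM E p = h"
      using ln_put_mor[OF EL] ln_put_dom[OF EL] ln_put_get[OF EL] x h p_def by auto
    show "GetM H' h = GetM Hc h" using eM[OF p(1)] p H_mor_indep[OF h x] p_def by simp
  }
  {
    fix c d assume c: "c \<in> Obj C" and d: "d \<in> Mor D" and dd: "Dom D d = GetO H' c"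
    define x where "x = pick c"
    have x: "x \<in> Obj B" "GetO E x = c" using pick[OF c] x_def by auto
    have dx: "Dom D d = GetO (lens_comp E H') x" using dd x unfolding lens_comp_def by simp
    have "Put (lens_comp E H') x d = Put G x d" using eq x(1) d dx unfolding lens_eq_def by blast
    then have 1: "Put E x (Put H' c d) = Put G x d" using x unfolding lens_comp_def by simp
    have m: "Put H' c d \<in> Mor C" "Dom C (Put H' c d) = c"
      using ln_put_mor[OF H' c d dd] ln_put_dom[OF H' c d dd] by auto
    have "Put H' c d = GetM E (Put E x (Put H' c d))"
      using ln_put_get[OF EL x(1) m(1)] m x by simp
    also have "\<dots> = Put Hc c d" using 1 x_def unfolding Hc_simps by simp
    finally show "Put H' c d = Put Hc c d" .
  }
qed

end

theorem corollary6p4: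
  fixes B :: "('bo, 'bm) cat" and C :: "('co, 'cm) cat" and E :: "('bo, 'bm, 'co, 'cm) lens"
  assumes "is_category B" and "is_category C"
    and "lens_epi B C E"
  shows "lens_coequaliser TYPE('do \<times> 'dm) (pk_cat B E) B C (pk_P1 E) (pk_P2 E) E"
proof -
  have EL: "is_lens B C E" using assms(3) unfolding lens_epi_def by auto
  have surj: "\<forall>c\<in>Obj C. \<exists>x\<in>Obj B. GetO E x = c" using epi_surj[OF assms] by blast
  have K: "lens_eq (pk_cat B E) C (lens_comp (pk_P1 E) E) (lens_comp (pk_P2 E) E)"
    unfolding lens_eq_def
  proof (intro conjI ballI impI)
    fix k assume "k \<in> Obj (pk_cat B E)"
    then show "GetO (lens_comp (pk_P1 E) E) k = GetO (lens_comp (pk_P2 E) E) k"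
      unfolding pk_cat_def lens_comp_def pk_P1_def pk_P2_def by auto
  next
    fix k assume "k \<in> Mor (pk_cat B E)"
    then show "GetM (lens_comp (pk_P1 E) E) k = GetM (lens_comp (pk_P2 E) E) k"
      unfolding pk_cat_def lens_comp_def pk_P1_def pk_P2_def by auto
  next
    fix k c assume k: "k \<in> Obj (pk_cat B E)" and c: "c \<in> Mor C"
      and dc: "Dom C c = GetO (lens_comp (pk_P1 E) E) k"
    obtain x y where xy: "k = (x, y)" "x \<in> Obj B" "y \<in> Obj B" "GetO E x = GetO E y"
      using k unfolding pk_cat_def by auto
    have dcx: "Dom C c = GetO E x" and dcy: "Dom C c = GetO E y"
      using dc xy unfolding lens_comp_def pk_P1_def by auto
    have gx: "GetM E (Put E x c) = c" using ln_put_get[OF EL xy(2) c dcx] .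
    have gy: "GetM E (Put E y c) = c" using ln_put_get[OF EL xy(3) c dcy] .
    show "Put (lens_comp (pk_P1 E) E) k c = Put (lens_comp (pk_P2 E) E) k c"
      unfolding lens_comp_def pk_P1_def pk_P2_def using xy gx gy by simp
  qed
  show ?thesis
    unfolding lens_coequaliser_def
  proof (intro conjI allI impI EL K)
    fix D :: "('do, 'dm) cat" and G
    assume D: "is_category D" and GL: "is_lens B D G"
      and KG: "lens_eq (pk_cat B E) D (lens_comp (pk_P1 E) G) (lens_comp (pk_P2 E) G)"
    interpret cs: coeq_setup B C D E G
      using assms(1,2) D EL GL surj KG by unfold_locales
    show "\<exists>H. is_lens C D H \<and> lens_eq B D (lens_comp E H) G \<and>
             (\<forall>H'. is_lens C D H' \<longrightarrow> lens_eq B D (lens_comp E H') G \<longrightarrow> lens_eq C D H' H)"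
      using cs.Hc_lens cs.Hc_fact cs.Hc_unique by blast
  qed
qed

end
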